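(* Let $\kappa$ be a regular uncountable cardinal with $\kappa^{<\kappa}=\kappa$ and $\gamma^\omega<\kappa$ for all $\gamma<\kappa$, and suppose $\kappa=\lambda^+$. Then the linear order $I^0$ is $(<\kappa,bs)$-stable.
   Context: Order $\kappa\times\mathbb Q$ lexicographically; $I^0$ is the set of $f:\omega\to\kappa\times\mathbb Q$, $f(n)=(f_1(n),f_2(n))$, with $\{n<\omega\mid f_1(n)\ne0\}$ finite, ordered by $f<g$ iff $f(n)<g(n)$ for the least $n$ with $f(n)\ne g(n)$. For a linear order $A$, $B\subseteq A$ and $a\in A$, $tp_{bs}(a,B,A)$ is the set of atomic and negated atomic formulas (in the language $\{<\}$) with parameters from $B$ satisfied by $a$. $A$ is $(<\kappa,bs)$-stable if for every $B\subseteq A$ with $|B|<\kappa$, $|\{tp_{bs}(a,B,A)\mid a\in A\}|<\kappa$. *)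

theory Defs
  imports Main "HOL-Library.Countable_Set"
begin

unbundle cardinal_syntax

text \<open>Terms of the language {<} with one free variable (Var) and parameters (Par b).\<close>
datatype 'a bterm = Var | Par 'a
datatype 'a batom = Lt "'a bterm" "'a bterm" | Eq "'a bterm" "'a bterm"
datatype 'a blit = Pos "'a batom" | Neg "'a batom"

fun bterm_params :: "'a bterm \<Rightarrow> 'a set" where
  "bterm_params Var = {}" | "bterm_params (Par b) = {b}"

fun batom_params :: "'a batom \<Rightarrow> 'a set" where
  "batom_params (Lt s t) = bterm_params s \<union> bterm_params t"
| "batom_params (Eq s t) = bterm_params s \<union> bterm_params t"

fun blit_params :: "'a blit \<Rightarrow> 'a set" where
  "blit_params (Pos p) = batom_params p" | "blit_params (Neg p) = batom_params p"

fun bterm_eval :: "'a \<Rightarrow> 'a bterm \<Rightarrow> 'a" where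
  "bterm_eval a Var = a" | "bterm_eval a (Par b) = b"

fun batom_holds :: "('a \<Rightarrow> 'a \<Rightarrow> bool) \<Rightarrow> 'a \<Rightarrow> 'a batom \<Rightarrow> bool" where
  "batom_holds lt a (Lt s t) = lt (bterm_eval a s) (bterm_eval a t)"
| "batom_holds lt a (Eq s t) = (bterm_eval a s = bterm_eval a t)"

fun blit_holds :: "('a \<Rightarrow> 'a \<Rightarrow> bool) \<Rightarrow> 'a \<Rightarrow> 'a blit \<Rightarrow> bool" where
  "blit_holds lt a (Pos p) = batom_holds lt a p"
| "blit_holds lt a (Neg p) = (\<not> batom_holds lt a p)"

text \<open>tp_bs(a,B,A): the linear order A is given by its carrier and strict order lt.\<close>
definition tp_bs :: "('a \<Rightarrow> 'a \<Rightarrow> bool) \<Rightarrow> 'a \<Rightarrow> 'a set \<Rightarrow> 'a blit set" where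
  "tp_bs lt a B = {\<phi>. blit_params \<phi> \<subseteq> B \<and> blit_holds lt a \<phi>}"

text \<open>(<kappa,bs)-stability, kappa a cardinal given as a (cardinal) well-order relation.\<close>
definition lt_bs_stable :: "'k rel \<Rightarrow> 'a set \<Rightarrow> ('a \<Rightarrow> 'a \<Rightarrow> bool) \<Rightarrow> bool" where
  "lt_bs_stable kappa A lt \<longleftrightarrow>
     (\<forall>B. B \<subseteq> A \<and> |B| <o kappa \<longrightarrow> |{tp_bs lt a B | a. a \<in> A}| <o kappa)"

definition rless :: "'k rel \<Rightarrow> 'k \<Rightarrow> 'k \<Rightarrow> bool" where
  "rless r a b \<longleftrightarrow> (a, b) \<in> r \<and> a \<noteq> b"

definition rzero :: "'k rel \<Rightarrow> 'k" where
  "rzero r = (THE x. x \<in> Field r \<and> (\<forall>y \<in> Field r. (x, y) \<in> r))"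

definition lexless :: "'k rel \<Rightarrow> 'k \<times> rat \<Rightarrow> 'k \<times> rat \<Rightarrow> bool" where
  "lexless r p q \<longleftrightarrow> rless r (fst p) (fst q) \<or> (fst p = fst q \<and> snd p < snd q)"

definition I0 :: "'k rel \<Rightarrow> (nat \<Rightarrow> 'k \<times> rat) set" where
  "I0 r = {f. (\<forall>n. fst (f n) \<in> Field r) \<and> finite {n. fst (f n) \<noteq> rzero r}}"

definition I0less :: "'k rel \<Rightarrow> (nat \<Rightarrow> 'k \<times> rat) \<Rightarrow> (nat \<Rightarrow> 'k \<times> rat) \<Rightarrow> bool" where
  "I0less r f g \<longleftrightarrow> f \<noteq> g \<and> lexless r (f (LEAST n. f n \<noteq> g n)) (g (LEAST n. f n \<noteq> g n))"

end

theory Submission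
  imports Defs
begin

lemma small_finite:
  assumes r: "Card_order r" and inf: "\<not> finite (Field r)" and f: "finite X"
  shows "|X| <o r"
  using finite_ordLess_infinite[OF card_of_Well_order card_order_on_well_order_on[OF r]] f inf
  by (simp add: Field_card_of)

lemma small_Times:
  assumes r: "Card_order r" and inf: "\<not> finite (Field r)" and A: "|A| <o r" and B: "|B| <o r"
  shows "|A \<times> B| <o r"
proof (cases "A = {} \<or> B = {}")
  case True
  have "A \<times> B = {}" using True by blast
  then show ?thesis using small_finite[OF r inf, of "A \<times> B"] by (metis finite.emptyI)
next
  case False
  have "|A| \<le>o |B| \<or> |B| \<le>o |A|"
    using ordLeq_total card_of_Well_order[of A] card_of_Well_order[of B] by blast
  then show ?thesis
  proof
    assume le: "|A| \<le>o |B|"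
    show ?thesis
    proof (cases "finite B")
      case True
      then have "finite A" using le card_of_ordLeq_finite by blast
      then show ?thesis using True by (intro small_finite[OF r inf] finite_cartesian_product)
    next
      case fin: False
      have "|A \<times> B| =o |B|" using card_of_Times_infinite[OF fin _ le] False by blast
      then show ?thesis using B ordIso_ordLess_trans by blast
    qed
  next
    assume le: "|B| \<le>o |A|"
    show ?thesis
    proof (cases "finite A")
      case True
      then have "finite B" using le card_of_ordLeq_finite by blast
      then show ?thesis using True by (intro small_finite[OF r inf] finite_cartesian_product)
    next
      case fin: False
      have "|A \<times> B| =o |A|" using card_of_Times_infinite[OF fin _ le] False by blast
      then show ?thesis using A ordIso_ordLess_trans by blast
    qed
  qed
qed

lemma small_image:
  assumes "|A| <o r" shows "|f ` A| <o r"
  using card_of_image assms ordLeq_ordLess_trans by blast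

lemma small_subset:
  assumes "|A| <o r" "B \<subseteq> A" shows "|B| <o r"
  using card_of_mono1 assms ordLeq_ordLess_trans by blast

lemma small_nat:
  assumes "natLeq <o r" shows "|UNIV :: nat set| <o r"
  using card_of_nat assms ordIso_ordLess_trans by blast

lemma small_rat:
  assumes "natLeq <o r" shows "|UNIV :: rat set| <o r"
proof -
  have "|UNIV :: rat set| \<le>o |UNIV :: nat set|"
    unfolding card_of_ordLeq[symmetric] using countableI_type[of "UNIV :: rat set"]
    unfolding countable_def by blast
  then show ?thesis using small_nat[OF assms] ordLeq_ordLess_trans by blast
qed

lemma small_Func:
  fixes r :: "'k rel" and V :: "'b set"
  assumes r: "Card_order r" and fld: "Field r = UNIV"
    and omega_power: "\<forall>A :: 'k set. |A| <o r \<longrightarrow> |Func (UNIV :: nat set) A| <o r"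
    and V: "|V| <o r"
  shows "|{f :: nat \<Rightarrow> 'b. \<forall>n. f n \<in> V}| <o r"
proof -
  have "|UNIV :: 'k set| =o r" using card_of_Field_ordIso[OF r] fld by simp
  then have "|V| \<le>o |UNIV :: 'k set|"
    using V ordLess_imp_ordLeq ordIso_symmetric ordLeq_ordIso_trans by blast
  then obtain g :: "'b \<Rightarrow> 'k" where g: "inj_on g V" using card_of_ordLeq[of V "UNIV :: 'k set"] by blast
  have A: "|g ` V| <o r" using small_image[OF V] .
  have "|{f :: nat \<Rightarrow> 'b. \<forall>n. f n \<in> V}| \<le>o |Func (UNIV :: nat set) (g ` V)|"
    unfolding card_of_ordLeq[symmetric]
  proof (intro exI conjI)
    show "inj_on (\<lambda>f. g \<circ> f) {f :: nat \<Rightarrow> 'b. \<forall>n. f n \<in> V}"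
      using g unfolding inj_on_def by (auto simp: fun_eq_iff)
    show "(\<lambda>f. g \<circ> f) ` {f :: nat \<Rightarrow> 'b. \<forall>n. f n \<in> V} \<subseteq> Func UNIV (g ` V)"
      by (auto simp: Func_def)
  qed
  then show ?thesis using omega_power A ordLeq_ordLess_trans by blast
qed

lemma tp_eq:
  assumes "\<forall>b\<in>B. (lt a b = lt a' b) \<and> (lt b a = lt b a') \<and> (a = b \<longleftrightarrow> a' = b)"
    and "lt a a = lt a' a'"
  shows "tp_bs lt a B = tp_bs lt a' B"
proof -
  have at: "batom_holds lt a p = batom_holds lt a' p" if "batom_params p \<subseteq> B" for p
  proof (cases p)
    case (Lt s t) then show ?thesis using that assms by (cases s; cases t) auto
  next
    case (Eq s t) then show ?thesis using that assms by (cases s; cases t) auto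
  qed
  have "blit_holds lt a \<phi> = blit_holds lt a' \<phi>" if "blit_params \<phi> \<subseteq> B" for \<phi>
    using that at by (cases \<phi>) auto
  then show ?thesis unfolding tp_bs_def by blast
qed

lemma least_cmp:
  assumes "\<forall>i<m. f i = g i" "f m \<noteq> g m"
  shows "I0less r f g = lexless r (f m) (g m)" "I0less r g f = lexless r (g m) (f m)"
proof -
  have l1: "(LEAST i. f i \<noteq> g i) = m"
    by (rule Least_equality) (use assms in \<open>auto simp: not_less[symmetric]\<close>)
  have l2: "(LEAST i. g i \<noteq> f i) = m"
    by (rule Least_equality) (use assms in \<open>auto simp: not_less[symmetric]\<close>)
  have "f \<noteq> g" using assms by auto
  then show "I0less r f g = lexless r (f m) (g m)" "I0less r g f = lexless r (g m) (f m)"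
    unfolding I0less_def using l1 l2 by auto
qed


theorem mainTheorem14:
  fixes kappa :: "'k rel"
  assumes card: "Card_order kappa" and field: "Field kappa = UNIV"
    and uncountable: "natLeq <o kappa"
    and regular: "regularCard kappa"
    and less_kappa_power: "\<forall>A :: 'k set. |A| <o kappa \<longrightarrow> |Func A (UNIV :: 'k set)| \<le>o kappa"
    and omega_power: "\<forall>A :: 'k set. |A| <o kappa \<longrightarrow> |Func (UNIV :: nat set) A| <o kappa"
    and successor: "\<exists>L :: 'k set. kappa =o cardSuc |L|"
  shows "lt_bs_stable kappa (I0 kappa) (I0less kappa)"
proof -
  have WO: "Well_order kappa" using card card_order_on_well_order_on by blast
  have wo: "wo_rel kappa" using WO by (simp add: wo_rel_def)
  have inf: "\<not> finite (Field kappa)"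
  proof
    assume "finite (Field kappa)"
    then have "kappa <o natLeq"
      using finite_ordLess_infinite[OF WO natLeq_Well_order] by (simp add: Field_natLeq)
    then show False using uncountable ordLess_transitive ordLess_irreflexive by blast
  qed
  have trans: "(x, z) \<in> kappa" if "(x, y) \<in> kappa" "(y, z) \<in> kappa" for x y z
    using WO that unfolding well_order_on_def linear_order_on_def partial_order_on_def
      preorder_on_def trans_def by blast
  have antis: "x = y" if "(x, y) \<in> kappa" "(y, x) \<in> kappa" for x y
    using WO that unfolding well_order_on_def linear_order_on_def partial_order_on_def
      antisym_def by blast
  have total: "(x, y) \<in> kappa \<or> (y, x) \<in> kappa" if "x \<noteq> y" for x y
    using WO that field unfolding well_order_on_def linear_order_on_def total_on_def by blast
  show ?thesis unfolding lt_bs_stable_def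
  proof (intro allI impI)
    fix B assume "B \<subseteq> I0 kappa \<and> |B| <o kappa"
    then have Bs: "|B| <o kappa" by blast
    define lt where "lt = I0less kappa"
    define V where "V = (\<lambda>(b, n). b n) ` (B \<times> (UNIV :: nat set))"
    define V1 where "V1 = fst ` V"
    define agree where "agree a n = (\<exists>b\<in>B. \<forall>i<n. a i = b i)" for a :: "nat \<Rightarrow> 'k \<times> rat" and n
    define N where "N a = (LEAST n. \<not> agree a n)" for a
    define mab where "mab \<alpha> = (if \<exists>\<gamma>\<in>V1. rless kappa \<alpha> \<gamma>
        then Some (wo_rel.minim kappa {\<gamma>\<in>V1. rless kappa \<alpha> \<gamma>}) else None)" for \<alpha>
    define cc where "cc x = (if fst x \<in> V1 then Inl x else Inr (mab (fst x)))" for x :: "'k \<times> rat"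
    define F where "F a = (if \<forall>n. agree a n then Inl a
        else Inr (N a, (\<lambda>i. if i < N a - 1 then a i else (undefined :: 'k \<times> rat)), cc (a (N a - 1))))"
      for a
    have mono: "rless kappa \<alpha>' \<beta>"
      if "mab \<alpha> = mab \<alpha>'" "\<alpha>' \<notin> V1" "\<beta> \<in> V1" "rless kappa \<alpha> \<beta>" for \<alpha> \<alpha>' \<beta>
    proof -
      let ?S = "{\<gamma>\<in>V1. rless kappa \<alpha> \<gamma>}"
      let ?S' = "{\<gamma>\<in>V1. rless kappa \<alpha>' \<gamma>}"
      have "\<beta> \<in> ?S" using that by auto
      then have m: "mab \<alpha> = Some (wo_rel.minim kappa ?S)" "(wo_rel.minim kappa ?S, \<beta>) \<in> kappa"
        using wo_rel.minim_least[OF wo, of ?S \<beta>] field unfolding mab_def by auto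
      then have ne: "?S' \<noteq> {}" and eqm: "wo_rel.minim kappa ?S' = wo_rel.minim kappa ?S"
        using that(1) unfolding mab_def by (auto split: if_splits)
      have "wo_rel.minim kappa ?S' \<in> ?S'" using wo_rel.minim_in[OF wo, of ?S'] ne field by auto
      then have "(\<alpha>', wo_rel.minim kappa ?S) \<in> kappa" using eqm unfolding rless_def by auto
      then have "(\<alpha>', \<beta>) \<in> kappa" using m(2) trans by blast
      moreover have "\<alpha>' \<noteq> \<beta>" using that by auto
      ultimately show ?thesis unfolding rless_def by auto
    qed
    have ccl: "lexless kappa x v = lexless kappa x' v \<and> lexless kappa v x = lexless kappa v x'"
      if "cc x = cc x'" "v \<in> V" "x \<noteq> v" "x' \<noteq> v" for x x' v
    proof (cases "fst x \<in> V1")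
      case True
      then have "x = x'" using that(1) unfolding cc_def by (auto split: if_splits)
      then show ?thesis by simp
    next
      case False
      then have F': "fst x' \<notin> V1" and mq: "mab (fst x) = mab (fst x')"
        using that(1) unfolding cc_def by (auto split: if_splits)
      have v1: "fst v \<in> V1" using that(2) unfolding V1_def by auto
      have ne: "fst x \<noteq> fst v" "fst x' \<noteq> fst v" using False F' v1 by auto
      have i1: "rless kappa (fst x) (fst v) = rless kappa (fst x') (fst v)"
        using mono[OF mq F' v1] mono[OF mq[symmetric] False v1] by blast
      have i2: "rless kappa (fst v) y = (\<not> rless kappa y (fst v))" if "y \<noteq> fst v" for y
        using that total antis unfolding rless_def by blast
      show ?thesis using i1 i2[OF ne(1)] i2[OF ne(2)] ne unfolding lexless_def by auto
    qed
    have key: "tp_bs lt a B = tp_bs lt a' B" if eq: "F a = F a'" for a a'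
    proof (cases "\<forall>n. agree a n")
      case True
      then have "a = a'" using eq unfolding F_def by (auto split: if_splits)
      then show ?thesis by simp
    next
      case nb: False
      then have nb': "\<not> (\<forall>n. agree a' n)" using eq unfolding F_def by (auto split: if_splits)
      define n where "n = N a"
      have eq2: "N a' = n" "(\<lambda>i. if i < n - 1 then a i else (undefined :: 'k \<times> rat))
           = (\<lambda>i. if i < n - 1 then a' i else undefined)" "cc (a (n - 1)) = cc (a' (n - 1))"
        using eq nb nb' unfolding F_def n_def by (auto split: if_splits)
      have pre: "a i = a' i" if "i < n - 1" for i
        using fun_cong[OF eq2(2), of i] that by simp
      have na: "\<not> agree a n" unfolding n_def N_def using nb by (metis (mono_tags) LeastI_ex)
      have na': "\<not> agree a' n" unfolding eq2(1)[symmetric] N_def using nb' by (metis (mono_tags) LeastI_ex)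
      show ?thesis unfolding lt_def
      proof (rule tp_eq)
        show "I0less kappa a a = I0less kappa a' a'" unfolding I0less_def by simp
        show "\<forall>b\<in>B. (I0less kappa a b = I0less kappa a' b) \<and> (I0less kappa b a = I0less kappa b a')
            \<and> (a = b \<longleftrightarrow> a' = b)"
        proof
          fix b assume b: "b \<in> B"
          have nab: "a \<noteq> b" "a' \<noteq> b" using na na' b unfolding agree_def by auto
          have "n \<noteq> 0" using na b unfolding agree_def by auto
          then obtain k where nk: "n = Suc k" by (cases n) auto
          have pre': "a i = a' i" if "i < k" for i using pre that nk by simp
          show "(I0less kappa a b = I0less kappa a' b) \<and> (I0less kappa b a = I0less kappa b a')
            \<and> (a = b \<longleftrightarrow> a' = b)"
          proof (cases "\<exists>i<k. a i \<noteq> b i")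
            case True
            then obtain i where i: "i < k" "a i \<noteq> b i" by blast
            define m where "m = (LEAST i. a i \<noteq> b i)"
            have mle: "m \<le> i" unfolding m_def using i(2) by (rule Least_le)
            have am: "a m \<noteq> b m" unfolding m_def using i(2) by (rule LeastI)
            have bel: "\<forall>j<m. a j = b j" unfolding m_def using not_less_Least by blast
            have bel': "\<forall>j<m. a' j = b j" using bel pre' mle i(1) by auto
            have am': "a' m = a m" using pre' mle i(1) by auto
            show ?thesis using least_cmp[OF bel am, of kappa] least_cmp[of m a' b kappa] bel' am' am nab
              by auto
          next
            case False
            then have bel: "\<forall>j<k. a j = b j" by auto
            then have bel': "\<forall>j<k. a' j = b j" using pre' by auto
            have ak: "a k \<noteq> b k"
            proof
              assume "a k = b k"
              then have "\<forall>j<n. a j = b j" using bel nk less_Suc_eq by auto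
              then show False using na b unfolding agree_def by auto
            qed
            have ak': "a' k \<noteq> b k"
            proof
              assume "a' k = b k"
              then have "\<forall>j<n. a' j = b j" using bel' nk less_Suc_eq by auto
              then show False using na' b unfolding agree_def by auto
            qed
            have vk: "b k \<in> V" unfolding V_def using b by force
            have "cc (a k) = cc (a' k)" using eq2(3) nk by simp
            from ccl[OF this vk ak ak'] show ?thesis
              using least_cmp[OF bel ak, of kappa] least_cmp[OF bel' ak', of kappa] nab by auto
          qed
        qed
      qed
    qed
    define P where "P = (\<lambda>(b, n) i. if i < n then b i else (undefined :: 'k \<times> rat)) ` (B \<times> (UNIV :: nat set))
        \<union> {\<lambda>i. undefined}"
    have sub: "range F \<subseteq> {f. \<forall>n. f n \<in> V} <+> (UNIV \<times> P \<times> ((V1 \<times> UNIV) <+> (Some ` V1 \<union> {None})))"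
    proof
      fix c assume "c \<in> range F"
      then obtain a where c: "c = F a" by blast
      show "c \<in> {f. \<forall>n. f n \<in> V} <+> (UNIV \<times> P \<times> ((V1 \<times> UNIV) <+> (Some ` V1 \<union> {None})))"
      proof (cases "\<forall>n. agree a n")
        case True
        have "a n \<in> V" for n
        proof -
          obtain b where "b \<in> B" "\<forall>i<Suc n. a i = b i" using True unfolding agree_def by blast
          then show ?thesis unfolding V_def by force
        qed
        then show ?thesis using True c unfolding F_def by auto
      next
        case False
        have pP: "(\<lambda>i. if i < N a - 1 then a i else (undefined :: 'k \<times> rat)) \<in> P"
        proof (cases "N a = 0")
          case True then show ?thesis unfolding P_def by auto
        next
          case False
          then have "N a - 1 < N a" by simp
          then have "agree a (N a - 1)" using not_less_Least[of "N a - 1" "\<lambda>n. \<not> agree a n"] unfolding N_def by blast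
          then obtain b where "b \<in> B" "\<forall>i<N a - 1. a i = b i" unfolding agree_def by blast
          then have "(\<lambda>i. if i < N a - 1 then a i else (undefined :: 'k \<times> rat))
              = (\<lambda>(b, n) i. if i < n then b i else (undefined :: 'k \<times> rat)) (b, N a - 1)"
            by auto
          then show ?thesis unfolding P_def using \<open>b \<in> B\<close> by blast
        qed
        have cP: "cc x \<in> (V1 \<times> UNIV) <+> (Some ` V1 \<union> {None})" for x
        proof (cases "fst x \<in> V1")
          case True then show ?thesis unfolding cc_def by (cases x) auto
        next
          case False
          have "mab (fst x) \<in> Some ` V1 \<union> {None}"
          proof (cases "\<exists>\<gamma>\<in>V1. rless kappa (fst x) \<gamma>")
            case True
            then have "wo_rel.minim kappa {\<gamma>\<in>V1. rless kappa (fst x) \<gamma>} \<in> {\<gamma>\<in>V1. rless kappa (fst x) \<gamma>}"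
              using wo_rel.minim_in[OF wo, of "{\<gamma>\<in>V1. rless kappa (fst x) \<gamma>}"] field by auto
            then show ?thesis using True unfolding mab_def by auto
          qed (auto simp: mab_def)
          then show ?thesis using False unfolding cc_def by auto
        qed
        show ?thesis using False c pP cP[of "a (N a - 1)"] unfolding F_def by auto
      qed
    qed
    have natS: "|UNIV :: nat set| <o kappa" using small_nat[OF uncountable] .
    have VS: "|V| <o kappa" unfolding V_def by (rule small_image, rule small_Times[OF card inf Bs natS])
    have V1S: "|V1| <o kappa" unfolding V1_def by (rule small_image[OF VS])
    have PS: "|P| <o kappa" unfolding P_def
      by (rule card_of_Un_ordLess_infinite_Field[OF inf card],
          rule small_image, rule small_Times[OF card inf Bs natS], rule small_finite[OF card inf], simp)
    have S1: "|{f :: nat \<Rightarrow> 'k \<times> rat. \<forall>n. f n \<in> V}| <o kappa" using small_Func[OF card field omega_power VS] .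
    have S2: "|(V1 \<times> (UNIV :: rat set)) <+> (Some ` V1 \<union> {None})| <o kappa"
      by (intro card_of_Plus_ordLess_infinite_Field[OF inf card] small_Times[OF card inf]
          card_of_Un_ordLess_infinite_Field[OF inf card] small_rat[OF uncountable] V1S
          small_image small_finite[OF card inf]) simp
    have S3: "|{f :: nat \<Rightarrow> 'k \<times> rat. \<forall>n. f n \<in> V} <+> ((UNIV :: nat set) \<times> P \<times> ((V1 \<times> (UNIV :: rat set)) <+> (Some ` V1 \<union> {None})))| <o kappa"
      by (rule card_of_Plus_ordLess_infinite_Field[OF inf card S1],
          rule small_Times[OF card inf natS], rule small_Times[OF card inf PS S2])
    have rS: "|range F| <o kappa" using small_subset[OF S3 sub] .
    have "{tp_bs (I0less kappa) a B |a. a \<in> I0 kappa} \<subseteq> (\<lambda>c. tp_bs lt (SOME a. F a = c) B) ` range F"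
    proof
      fix t assume "t \<in> {tp_bs (I0less kappa) a B |a. a \<in> I0 kappa}"
      then obtain a where t: "t = tp_bs lt a B" unfolding lt_def by blast
      have "F (SOME a'. F a' = F a) = F a" by (rule someI[of "\<lambda>a'. F a' = F a" a]) simp
      then have "tp_bs lt (SOME a'. F a' = F a) B = t" using key t by blast
      then show "t \<in> (\<lambda>c. tp_bs lt (SOME a. F a = c) B) ` range F" by blast
    qed
    then show "|{tp_bs (I0less kappa) a B |a. a \<in> I0 kappa}| <o kappa"
      using small_subset[OF small_image[OF rS]] by blast
  qed
qed

end
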